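(* Let $5\leq p_1<\cdots<p_m$ be $m$ distinct primes. Then the set of integers $x$ such that for each $i=1,\ldots,m$ there is an odd integer $k_i$ with $x=k_ip_i+4N(p_i/6)$ or $x=k_ip_i-4N(p_i/6)$ (the $m$-fold non-ranks of $p_1,\ldots,p_m$) is the union of exactly $2^m$ pairwise distinct arithmetic progressions (residue classes) with common difference $2p_1\cdots p_m$.
   Context: $N(x)$ denotes the integer nearest to the real number $x$. *)

theory Defs
  imports Complex_Main "HOL-Computational_Algebra.Primes"
begin

(* N(x): the integer nearest to x. We use the library's round (= floor (x + 1/2));
   for x = p/6 with p >= 5 prime there is never a tie, so the choice is immaterial. *)
definition N :: "real \<Rightarrow> int" where
  "N x = round x"

definition nonranks :: "nat \<Rightarrow> (nat \<Rightarrow> nat) \<Rightarrow> int set" where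
  "nonranks m p = {x. \<forall>i<m. \<exists>k::int. odd k \<and>
      (x = k * int (p i) + 4 * N (real (p i) / 6) \<or> x = k * int (p i) - 4 * N (real (p i) / 6))}"

end

theory Submission
  imports Defs
begin

lemma crt_bij:
  fixes a b :: int
  assumes a: "a > 0" and b: "b > 0" and cop: "coprime a b"
  shows "bij_betw (\<lambda>r. (r mod a, r mod b)) {0..<a*b} ({0..<a}\<times>{0..<b})"
proof -
  let ?f = "\<lambda>r. (r mod a, r mod b)"
  have inj: "inj_on ?f {0..<a*b}"
  proof (rule inj_onI)
    fix r s assume r: "r \<in> {0..<a*b}" and s: "s \<in> {0..<a*b}" and eq: "?f r = ?f s"
    have "a dvd r - s" "b dvd r - s" using eq by (auto simp: mod_eq_dvd_iff)
    hence d: "a*b dvd r - s" using divides_mult cop by blast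
    show "r = s"
    proof (rule ccontr)
      assume "r \<noteq> s"
      hence "\<bar>a*b\<bar> \<le> \<bar>r - s\<bar>" using dvd_imp_le_int d by simp
      thus False using r s a b by auto
    qed
  qed
  have sub: "?f ` {0..<a*b} \<subseteq> {0..<a}\<times>{0..<b}" using a b by auto
  have "card (?f ` {0..<a*b}) = card ({0..<a}\<times>{0..<b})"
    using card_image[OF inj] a b by (simp add: card_cartesian_product nat_mult_distrib)
  hence "?f ` {0..<a*b} = {0..<a}\<times>{0..<b}"
    using card_subset_eq[OF _ sub] by simp
  thus ?thesis using inj by (simp add: bij_betw_def)
qed

lemma dvd_mod_shift:
  fixes d a r c :: int
  assumes "d dvd a"
  shows "d dvd (r mod a) - c \<longleftrightarrow> d dvd r - c"
  by (metis assms mod_eq_dvd_iff mod_mod_cancel)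

lemma dvd_mod_shift':
  fixes d a r c :: int
  assumes "d dvd a"
  shows "d dvd (r mod a) + c \<longleftrightarrow> d dvd r + c"
  using dvd_mod_shift[OF assms, of r "-c"] by simp

lemma card_T:
  fixes b c :: int
  assumes b: "b > 0" and nd: "\<not> b dvd 2*c"
  shows "card {v\<in>{0..<b}. b dvd v - c \<or> b dvd v + c} = 2"
proof -
  have "{v\<in>{0..<b}. b dvd v - c \<or> b dvd v + c} = {c mod b, (-c) mod b}"
  proof (intro set_eqI iffI)
    fix v assume "v \<in> {v\<in>{0..<b}. b dvd v - c \<or> b dvd v + c}"
    hence v: "0 \<le> v" "v < b" "b dvd v - c \<or> b dvd v - (-c)" by auto
    hence "v mod b = v" by simp
    with v show "v \<in> {c mod b, (-c) mod b}" by (metis insert_iff mod_eq_dvd_iff)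
  next
    fix v assume "v \<in> {c mod b, (-c) mod b}"
    then show "v \<in> {v\<in>{0..<b}. b dvd v - c \<or> b dvd v + c}"
    proof
      assume "v = c mod b"
      hence "b dvd v - c" by (simp add: mod_eq_dvd_iff[symmetric])
      thus ?thesis using b \<open>v = c mod b\<close> by simp
    next
      assume "v \<in> {(-c) mod b}"
      hence v: "v = (-c) mod b" by simp
      hence "b dvd v - (-c)" by (metis mod_mod_trivial mod_eq_dvd_iff)
      thus ?thesis using b v by simp
    qed
  qed
  moreover have "c mod b \<noteq> (-c) mod b"
  proof
    assume "c mod b = (-c) mod b"
    hence "b dvd c - (-c)" by (simp add: mod_eq_dvd_iff)
    thus False using nd by simp
  qed
  ultimately show ?thesis by simp
qed

lemma count_lemma:
  fixes q c :: "nat \<Rightarrow> int"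
  assumes "\<And>i. i < n \<Longrightarrow> q i > 0 \<and> coprime (2 * (\<Prod>j<i. q j)) (q i) \<and> \<not> q i dvd 2 * c i"
  shows "card {r\<in>{0..<2 * (\<Prod>i<n. q i)}. odd r \<and> (\<forall>i<n. q i dvd r - c i \<or> q i dvd r + c i)} = 2 ^ n"
  using assms
proof (induction n)
  case 0
  have "{r\<in>{0..<2 * (\<Prod>i<0. q i)}. odd r \<and> (\<forall>i<0. q i dvd r - c i \<or> q i dvd r + c i)} = {1::int}"
    by (auto; presburger)
  then show ?case by simp
next
  case (Suc n)
  define a where "a = 2 * (\<Prod>i<n. q i)"
  define b where "b = q n"
  define S where "S = {r\<in>{0..<a}. odd r \<and> (\<forall>i<n. q i dvd r - c i \<or> q i dvd r + c i)}"
  define T where "T = {v\<in>{0..<b}. b dvd v - c n \<or> b dvd v + c n}"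
  define S' where "S' = {r\<in>{0..<2 * (\<Prod>i<Suc n. q i)}. odd r \<and> (\<forall>i<Suc n. q i dvd r - c i \<or> q i dvd r + c i)}"
  have hS: "card S = 2^n" unfolding S_def a_def using Suc by auto
  have bpos: "b > 0" and cop: "coprime a b" and nd: "\<not> b dvd 2 * c n"
    using Suc.prems[of n] by (auto simp: a_def b_def)
  have apos: "a > 0" unfolding a_def using Suc.prems by (auto intro: prod_pos)
  have hT: "card T = 2" unfolding T_def using card_T[OF bpos nd] .
  have ab: "2 * (\<Prod>i<Suc n. q i) = a * b" by (simp add: a_def b_def)
  let ?f = "\<lambda>r. (r mod a, r mod b)"
  have bij: "bij_betw ?f {0..<a*b} ({0..<a}\<times>{0..<b})" using crt_bij[OF apos bpos cop] .
  have ev: "even a" by (simp add: a_def)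
  have qa: "\<And>i. i < n \<Longrightarrow> q i dvd a" unfolding a_def
    by (intro dvd_mult dvd_prodI) auto
  have S'eq: "S' = {r\<in>{0..<a*b}. ?f r \<in> S \<times> T}"
  proof -
    have "\<And>r. odd (r mod a) \<longleftrightarrow> odd r" using ev
      by (metis dvd_mod_iff)
    moreover have "\<And>r i. i < n \<Longrightarrow> (q i dvd r mod a - c i \<or> q i dvd r mod a + c i)
        \<longleftrightarrow> (q i dvd r - c i \<or> q i dvd r + c i)"
      using qa dvd_mod_shift dvd_mod_shift' by blast
    moreover have "\<And>r. (b dvd r mod b - c n \<or> b dvd r mod b + c n)
        \<longleftrightarrow> (b dvd r - c n \<or> b dvd r + c n)"
      using dvd_mod_shift[of b b] dvd_mod_shift'[of b b] by simp
    ultimately have key: "\<And>r. (odd r \<and> (\<forall>i<Suc n. q i dvd r - c i \<or> q i dvd r + c i))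
        \<longleftrightarrow> (odd (r mod a) \<and> (\<forall>i<n. q i dvd r mod a - c i \<or> q i dvd r mod a + c i))
            \<and> (b dvd r mod b - c n \<or> b dvd r mod b + c n)"
      unfolding b_def less_Suc_eq by blast
    have rng: "\<And>r. 0 \<le> r mod a \<and> r mod a < a" "\<And>r. 0 \<le> r mod b \<and> r mod b < b"
      using apos bpos by auto
    show ?thesis
      unfolding S'_def S_def T_def ab
    proof (intro set_eqI)
      fix r
      show "(r \<in> {r \<in> {0..<a * b}. odd r \<and> (\<forall>i<Suc n. q i dvd r - c i \<or> q i dvd r + c i)}) =
        (r \<in> {r \<in> {0..<a * b}. (r mod a, r mod b) \<in> {r \<in> {0..<a}. odd r \<and> (\<forall>i<n. q i dvd r - c i \<or> q i dvd r + c i)} \<times>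
                  {v \<in> {0..<b}. b dvd v - c n \<or> b dvd v + c n}})"
        using key[of r] rng[of r] by (simp only: mem_Collect_eq mem_Sigma_iff atLeastLessThan_iff) blast
    qed
  qed
  have "?f ` S' = S \<times> T"
  proof
    show "?f ` S' \<subseteq> S \<times> T" unfolding S'eq by auto
  next
    show "S \<times> T \<subseteq> ?f ` S'"
    proof
      fix z assume z: "z \<in> S \<times> T"
      have "S \<times> T \<subseteq> {0..<a}\<times>{0..<b}" unfolding S_def T_def by auto
      with z have "z \<in> ?f ` {0..<a*b}" using bij unfolding bij_betw_def by auto
      then obtain r where r: "r \<in> {0..<a*b}" "z = ?f r" by blast
      with z have "r \<in> S'" unfolding S'eq by auto
      with r show "z \<in> ?f ` S'" by blast
    qed
  qed
  moreover have "inj_on ?f S'"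
  proof -
    have inj0: "inj_on ?f {0..<a*b}" using bij by (simp add: bij_betw_def)
    have "S' \<subseteq> {0..<a*b}" unfolding S'eq by blast
    then show ?thesis by (rule inj_on_subset[OF inj0])
  qed
  ultimately have "card S' = card S * card T"
    using card_image[of ?f S'] card_cartesian_product[of S T] by simp
  then show ?case using hS hT unfolding S'_def by simp
qed

lemma char_lemma:
  fixes q c x :: int
  assumes q: "odd q" and c: "even c"
  shows "(\<exists>k::int. odd k \<and> (x = k * q + c \<or> x = k * q - c)) \<longleftrightarrow>
         odd x \<and> (q dvd x - c \<or> q dvd x + c)"
proof
  assume "\<exists>k::int. odd k \<and> (x = k * q + c \<or> x = k * q - c)"
  then obtain k where k: "odd k" "x = k * q + c \<or> x = k * q - c" by blast
  then show "odd x \<and> (q dvd x - c \<or> q dvd x + c)" using q c by auto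
next
  assume h: "odd x \<and> (q dvd x - c \<or> q dvd x + c)"
  show "\<exists>k::int. odd k \<and> (x = k * q + c \<or> x = k * q - c)"
  proof (cases "q dvd x - c")
    case True
    then obtain k where k: "x - c = q * k" by (auto elim: dvdE)
    have "odd (x - c)" using h c by simp
    hence "odd k" using k by simp
    thus ?thesis using k by (intro exI[of _ k]) (auto simp: algebra_simps)
  next
    case False
    then have "q dvd x + c" using h by blast
    then obtain k where k: "x + c = q * k" by (auto elim: dvdE)
    have "odd (x + c)" using h c by simp
    hence "odd k" using k by simp
    thus ?thesis using k by (intro exI[of _ k]) (auto simp: algebra_simps)
  qed
qed

theorem theorem3p13:
  fixes m :: nat and p :: "nat \<Rightarrow> nat"
  assumes "m \<ge> 1"
    and "\<And>i. i < m \<Longrightarrow> prime (p i)"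
    and "\<And>i j. i < j \<Longrightarrow> j < m \<Longrightarrow> p i < p j"
    and "5 \<le> p 0"
  shows "\<exists>R :: int set. R \<subseteq> {0..<2 * (\<Prod>i<m. int (p i))} \<and> card R = 2 ^ m \<and>
           nonranks m p = {x. x mod (2 * (\<Prod>i<m. int (p i))) \<in> R}"
proof -
  define q where "q i = int (p i)" for i
  define c where "c i = 4 * N (real (p i) / 6)" for i
  define M where "M = 2 * (\<Prod>i<m. int (p i))"
  have M': "M = 2 * (\<Prod>i<m. q i)" unfolding M_def q_def by simp
  have ge5: "p i \<ge> 5" if "i < m" for i
  proof (cases "i = 0")
    case True then show ?thesis using assms(4) by simp
  next
    case False then show ?thesis using assms(3)[of 0 i] assms(4) that by simp
  qed
  have oddq: "odd (q i)" if "i < m" for i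
    using prime_odd_nat[OF assms(2)[OF that]] ge5[OF that] unfolding q_def by simp
  have evc: "even (c i)" for i unfolding c_def by simp
  have nd: "\<not> q i dvd 2 * c i" if i: "i < m" for i
  proof
    assume d: "q i dvd 2 * c i"
    have pr: "prime (q i)" using assms(2)[OF i] unfolding q_def by simp
    define n where "n = N (real (p i) / 6)"
    have "real_of_int n \<ge> real (p i) / 6 - 1/2" unfolding n_def N_def by (rule of_int_round_ge)
    moreover have "real_of_int n \<le> real (p i) / 6 + 1/2" unfolding n_def N_def by (rule of_int_round_le)
    moreover have "real (p i) \<ge> 5" using ge5[OF i] by simp
    ultimately have n0: "n > 0" and n1: "n < q i" unfolding q_def by linarith+
    have "2 * c i = 2^3 * n" unfolding c_def n_def by simp
    with d have "q i dvd 2^3 \<or> q i dvd n" using pr prime_dvd_mult_iff by metis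
    moreover have "\<not> q i dvd n" using n0 n1 zdvd_not_zless by blast
    moreover have "\<not> q i dvd 2^3"
    proof
      assume "q i dvd 2^3"
      hence "q i dvd 2" using pr prime_dvd_power by blast
      hence "q i \<le> 2" by (simp add: zdvd_imp_le)
      thus False using ge5[OF i] unfolding q_def by simp
    qed
    ultimately show False by blast
  qed
  have cop: "coprime (2 * (\<Prod>j<i. q j)) (q i)" if i: "i < m" for i
  proof -
    have pr: "prime (q i)" using assms(2)[OF i] unfolding q_def by simp
    have "\<not> q i dvd 2 * (\<Prod>j<i. q j)"
    proof
      assume "q i dvd 2 * (\<Prod>j<i. q j)"
      hence "q i dvd 2 \<or> q i dvd (\<Prod>j<i. q j)" using pr prime_dvd_mult_iff by blast
      moreover have "\<not> q i dvd 2"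
      proof
        assume "q i dvd 2"
        hence "q i \<le> 2" by (simp add: zdvd_imp_le)
        thus False using ge5[OF i] unfolding q_def by simp
      qed
      ultimately obtain j where j: "j < i" "q i dvd q j" using pr prime_dvd_prod_iff[of "{..<i}" "q i" q] by auto
      hence "p i dvd p j" unfolding q_def by simp
      moreover have "prime (p j)" "prime (p i)" using assms(2) j i by auto
      ultimately have "p i = p j" by (simp add: primes_dvd_imp_eq)
      thus False using assms(3)[of j i] j i by simp
    qed
    then have "coprime (q i) (2 * (\<Prod>j<i. q j))" by (rule prime_imp_coprime[OF pr])
    then show ?thesis by (rule coprime_commute[THEN iffD1])
  qed
  have qpos: "q i > 0" if "i < m" for i using ge5[OF that] unfolding q_def by simp
  define R where "R = {r\<in>{0..<2 * (\<Prod>i<m. q i)}. odd r \<and> (\<forall>i<m. q i dvd r - c i \<or> q i dvd r + c i)}"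
  have cardR: "card R = 2 ^ m" unfolding R_def
    by (rule count_lemma) (use qpos cop nd in blast)
  have nr: "nonranks m p = {x. odd x \<and> (\<forall>i<m. q i dvd x - c i \<or> q i dvd x + c i)}"
  proof -
    have m0: "0 < m" using assms(1) by simp
    show ?thesis
      unfolding nonranks_def using char_lemma[OF oddq evc] m0 unfolding q_def c_def
      by (auto; blast)
  qed
  have Mpos: "M > 0" unfolding M' using qpos by (auto intro: prod_pos)
  have evM: "even M" unfolding M_def by simp
  have qM: "q i dvd M" if "i < m" for i unfolding M' using that
    by (intro dvd_mult dvd_prodI) auto
  have "nonranks m p = {x. x mod M \<in> R}"
  proof (intro set_eqI)
    fix x
    have o: "odd (x mod M) \<longleftrightarrow> odd x" using evM by (metis dvd_mod_iff)
    have d: "\<And>i. i < m \<Longrightarrow> (q i dvd x mod M - c i \<or> q i dvd x mod M + c i)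
        \<longleftrightarrow> (q i dvd x - c i \<or> q i dvd x + c i)"
      using qM dvd_mod_shift dvd_mod_shift' by blast
    have r: "0 \<le> x mod M" "x mod M < M" using Mpos by auto
    show "x \<in> nonranks m p \<longleftrightarrow> x \<in> {x. x mod M \<in> R}"
      unfolding nr R_def M'[symmetric] using o d r by auto
  qed
  moreover have "R \<subseteq> {0..<M}" unfolding R_def M' by blast
  ultimately show ?thesis using cardR unfolding M_def by blast
qed

end
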